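(* Let $(P,e)$, $P\in\mathcal{T}_k$, be a friendly tree pattern, let $\sigma(P,e)=(\tau(P),C)$ be its associated mesh pattern, let $i$ be the position of the largest value $k$ in $\tau(P)$, and let $\sigma^-(P,e)=(\tau(P),C\setminus\{(i-1,k)\})$. Then for every $n\ge 0$, $S_n(231,\sigma(P,e))=S_n(231,\sigma^-(P,e))$.
   Context: Binary trees: $\mathcal{T}_k$ is the set of binary trees on $k$ vertices labeled $1,\dots,k$ by the search tree property. $c_L(i),c_R(i),p(i)$: left child, right child, parent ($\varepsilon$ if nonexistent); $r(P)$ root; $P(i)$ subtree rooted at $i$; $L(i),R(i)$ subtrees rooted at $c_L(i),c_R(i)$. $B_R(i)=\{i,c_R(i),c_R^2(i),\dots\}$ is the vertex set of the right branch starting at $i$; $B_R^-(i)$ is $B_R(i)$ minus its last vertex. A tree pattern is $(P,e)$ with $e\colon[k]\setminus\{r(P)\}\to\{0,1\}$. Preorder: $\tau(\varepsilon)=$ empty, $\tau(P)=(r(P),\tau(L(P)),\tau(R(P)))$. $(P,e)$ is friendly if: (i) $p(k)\neq\varepsilon$ and $c_L(k)\neq\varepsilon$; (ii) $e(j)=0$ for all $j\in B_R^-(r(P))\setminus\{r(P)\}$; (iii) if $e(k)=1$ then $e(c_L(k))=0$. Mesh patterns: $(\tau,C)$ with $\tau\in S_k$, $C\subseteq\{0,\dots,k\}^2$; $\pi\in S_n$ contains it if there are indices $\nu_1<\dots<\nu_k$ with $\pi(\nu_1),\dots,\pi(\nu_k)$ order-isomorphic to $\tau$ and, with $\lambda_1<\dots<\lambda_k$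 these values sorted and $\nu_0=\lambda_0=0$, $\nu_{k+1}=\lambda_{k+1}=n+1$, no point $(j,\pi(j))$ lies in $(\nu_a,\nu_{a+1})\times(\lambda_b,\lambda_{b+1})$ for $(a,b)\in C$. Classical patterns are the case $C=\emptyset$. $S_n(\sigma_1,\sigma_2)$ is the set of permutations of $[n]$ avoiding both. $\sigma(P,e)$: with $\rho=\tau(P)^{-1}$, $C_j=\{(\rho(j)-1,m):m\in B_R^-(j)\}$ for $j\in[k]$; for non-root $j$, $C_j'=\emptyset$ if $e(j)=0$ and $C_j'=\{(\rho(j)-1,\min P(j)-1),(\rho(j)-1,\max P(j))\}$ if $e(j)=1$; $\sigma(P,e)=(\tau(P),\bigcup_jC_j\cup\bigcup_jC_j')$. *)

theory Defs
  imports "HOL-Library.Tree" "HOL-Combinatorics.Multiset_Permutations"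
begin

definition trees_k :: "nat \<Rightarrow> nat tree set" where
  "trees_k k = {P. inorder P = [1..<Suc k]}"

fun rootv :: "nat tree \<Rightarrow> nat option" where
  "rootv Leaf = None"
| "rootv (Node l x r) = Some x"

text \<open>Subtree P(i) rooted at vertex i (Leaf if i is not a vertex).\<close>
fun subtree_at :: "nat tree \<Rightarrow> nat \<Rightarrow> nat tree" where
  "subtree_at Leaf i = Leaf"
| "subtree_at (Node l x r) i =
     (if x = i then Node l x r
      else if i \<in> set_tree l then subtree_at l i else subtree_at r i)"

text \<open>Left / right child (None stands for epsilon).\<close>
definition cL :: "nat tree \<Rightarrow> nat \<Rightarrow> nat option" where
  "cL P i = (case subtree_at P i of Leaf \<Rightarrow> None | Node l _ _ \<Rightarrow> rootv l)"

definition cR :: "nat tree \<Rightarrow> nat \<Rightarrow> nat option" where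
  "cR P i = (case subtree_at P i of Leaf \<Rightarrow> None | Node _ _ r \<Rightarrow> rootv r)"

fun parent :: "nat tree \<Rightarrow> nat \<Rightarrow> nat option" where
  "parent Leaf i = None"
| "parent (Node l x r) i =
     (if rootv l = Some i \<or> rootv r = Some i then Some x
      else if i \<in> set_tree l then parent l i else parent r i)"

fun rspine :: "nat tree \<Rightarrow> nat list" where
  "rspine Leaf = []"
| "rspine (Node l x r) = x # rspine r"

definition BR :: "nat tree \<Rightarrow> nat \<Rightarrow> nat set" where
  "BR P i = set (rspine (subtree_at P i))"

definition BRm :: "nat tree \<Rightarrow> nat \<Rightarrow> nat set" where
  "BRm P i = set (butlast (rspine (subtree_at P i)))"

definition Pv :: "nat tree \<Rightarrow> nat \<Rightarrow> nat set" where
  "Pv P i = set_tree (subtree_at P i)"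

text \<open>A tree pattern is (P,e) with e : [k]\<setminus>{r(P)} \<rightarrow> {0,1}; we model e as a
  function nat \<Rightarrow> bool (True = 1, False = 0); its values off [k]\<setminus>{r(P)} are irrelevant.\<close>
definition friendly :: "nat \<Rightarrow> nat tree \<Rightarrow> (nat \<Rightarrow> bool) \<Rightarrow> bool" where
  "friendly k P e \<longleftrightarrow>
     parent P k \<noteq> None \<and> cL P k \<noteq> None
   \<and> (\<forall>j \<in> BRm P (the (rootv P)) - {the (rootv P)}. \<not> e j)
   \<and> (e k \<longrightarrow> \<not> e (the (cL P k)))"

text \<open>A permutation in S_m is a list of length m containing each of 1..m exactly once;
  its value at (1-based) position a is xs ! (a - 1).\<close>
definition perms :: "nat \<Rightarrow> nat list set" where
  "perms m = permutations_of_set {1..m}"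

type_synonym mesh = "nat list \<times> (nat \<times> nat) set"

definition contains :: "nat list \<Rightarrow> mesh \<Rightarrow> bool" where
  "contains \<pi> p \<longleftrightarrow>
    (let \<tau> = fst p; C = snd p; k = length \<tau>; n = length \<pi>;
         pv = (\<lambda>j. \<pi> ! (j - 1)); tv = (\<lambda>a. \<tau> ! (a - 1)) in
     \<exists>\<nu> :: nat \<Rightarrow> nat.
       (\<forall>a \<in> {1..k}. 1 \<le> \<nu> a \<and> \<nu> a \<le> n)
     \<and> (\<forall>a \<in> {1..k}. \<forall>b \<in> {1..k}. a < b \<longrightarrow> \<nu> a < \<nu> b)
     \<and> (\<forall>a \<in> {1..k}. \<forall>b \<in> {1..k}. pv (\<nu> a) < pv (\<nu> b) \<longleftrightarrow> tv a < tv b)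
     \<and> (let \<nu>' = (\<lambda>a. if a = 0 then 0 else if a = k + 1 then n + 1 else \<nu> a);
            vals = sorted_list_of_set {pv (\<nu> a) | a. a \<in> {1..k}};
            lam = (\<lambda>b. if b = 0 then 0 else if b = k + 1 then n + 1 else vals ! (b - 1)) in
        \<forall>(a, b) \<in> C. \<not> (\<exists>j \<in> {1..n}. \<nu>' a < j \<and> j < \<nu>' (a + 1)
                                    \<and> lam b < pv j \<and> pv j < lam (b + 1))))"

definition avoiders :: "nat \<Rightarrow> mesh \<Rightarrow> mesh \<Rightarrow> nat list set" where
  "avoiders n s1 s2 = {\<pi> \<in> perms n. \<not> contains \<pi> s1 \<and> \<not> contains \<pi> s2}"

definition p231 :: mesh where
  "p231 = ([2, 3, 1], {})"

text \<open>rho(j) - 1: the 0-based position of j in the list xs.\<close>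
definition idx :: "nat list \<Rightarrow> nat \<Rightarrow> nat" where
  "idx xs j = (LEAST a. a < length xs \<and> xs ! a = j)"

definition sigma :: "nat \<Rightarrow> nat tree \<Rightarrow> (nat \<Rightarrow> bool) \<Rightarrow> mesh" where
  "sigma k P e =
    (let \<tau> = preorder P in
     (\<tau>, (\<Union>j \<in> {1..k}. {(idx \<tau> j, m) | m. m \<in> BRm P j})
        \<union> (\<Union>j \<in> {1..k} - {the (rootv P)}.
              if e j then {(idx \<tau> j, Min (Pv P j) - 1), (idx \<tau> j, Max (Pv P j))} else {})))"

definition sigma_minus :: "nat \<Rightarrow> nat tree \<Rightarrow> (nat \<Rightarrow> bool) \<Rightarrow> mesh" where
  "sigma_minus k P e = (fst (sigma k P e), snd (sigma k P e) - {(idx (preorder P) k, k)})"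

end

theory Submission
  imports Defs
begin


definition nuE :: "nat \<Rightarrow> nat \<Rightarrow> (nat \<Rightarrow> nat) \<Rightarrow> nat \<Rightarrow> nat" where
  "nuE n k \<nu> a = (if a = 0 then 0 else if a = k + 1 then n + 1 else \<nu> a)"

definition lamE :: "nat list \<Rightarrow> nat \<Rightarrow> (nat \<Rightarrow> nat) \<Rightarrow> nat \<Rightarrow> nat" where
  "lamE \<pi> k \<nu> b = (if b = 0 then 0 else if b = k + 1 then length \<pi> + 1
     else sorted_list_of_set {\<pi> ! (\<nu> a - 1) | a. a \<in> {1..k}} ! (b - 1))"

definition occ :: "nat list \<Rightarrow> nat list \<Rightarrow> (nat \<Rightarrow> nat) \<Rightarrow> bool" where
  "occ \<pi> \<tau> \<nu> \<longleftrightarrow>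
       (\<forall>a \<in> {1..length \<tau>}. 1 \<le> \<nu> a \<and> \<nu> a \<le> length \<pi>)
     \<and> (\<forall>a \<in> {1..length \<tau>}. \<forall>b \<in> {1..length \<tau>}. a < b \<longrightarrow> \<nu> a < \<nu> b)
     \<and> (\<forall>a \<in> {1..length \<tau>}. \<forall>b \<in> {1..length \<tau>}.
          \<pi> ! (\<nu> a - 1) < \<pi> ! (\<nu> b - 1) \<longleftrightarrow> \<tau> ! (a - 1) < \<tau> ! (b - 1))"

definition boxok :: "nat list \<Rightarrow> nat \<Rightarrow> (nat \<Rightarrow> nat) \<Rightarrow> nat \<Rightarrow> nat \<Rightarrow> bool" where
  "boxok \<pi> k \<nu> a b \<longleftrightarrow> \<not> (\<exists>j \<in> {1..length \<pi>}. nuE (length \<pi>) k \<nu> a < j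
      \<and> j < nuE (length \<pi>) k \<nu> (a + 1)
      \<and> lamE \<pi> k \<nu> b < \<pi> ! (j - 1) \<and> \<pi> ! (j - 1) < lamE \<pi> k \<nu> (b + 1))"

lemma contains_iff:
  "contains \<pi> (\<tau>, C) \<longleftrightarrow> (\<exists>\<nu>. occ \<pi> \<tau> \<nu> \<and> (\<forall>(a, b) \<in> C. boxok \<pi> (length \<tau>) \<nu> a b))"
  unfolding contains_def occ_def boxok_def nuE_def lamE_def Let_def by auto

lemma mk231:
  assumes "1 \<le> p" "p < q" "q < r" "r \<le> length \<pi>"
    "\<pi> ! (r - 1) < \<pi> ! (p - 1)" "\<pi> ! (p - 1) < \<pi> ! (q - 1)"
  shows "contains \<pi> p231"
proof -
  have e: "{1..3::nat} = {1,2,3}" by auto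
  let ?nu = "\<lambda>a::nat. if a = 1 then p else if a = 2 then q else r"
  have "occ \<pi> [2,3,1] ?nu"
    unfolding occ_def using assms by (simp add: e)
  then show ?thesis unfolding p231_def contains_iff by auto
qed

lemma idx_props:
  assumes "x \<in> set xs"
  shows "idx xs x < length xs \<and> xs ! idx xs x = x"
proof -
  from assms obtain a where "a < length xs \<and> xs ! a = x" by (auto simp: in_set_conv_nth)
  then show ?thesis unfolding idx_def by (rule LeastI)
qed

lemma idx_nth:
  assumes "distinct xs" "a < length xs"
  shows "idx xs (xs ! a) = a"
  using idx_props[of "xs ! a" xs] assms nth_eq_iff_index_eq by auto

lemma lam_eq:
  assumes o: "occ \<pi> \<tau> \<nu>" and tau: "distinct \<tau>" "set \<tau> = {1..length \<tau>}"
    and b: "1 \<le> b" "b \<le> length \<tau>"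
  shows "lamE \<pi> (length \<tau>) \<nu> b = \<pi> ! (\<nu> (Suc (idx \<tau> b)) - 1)"
proof -
  let ?k = "length \<tau>"
  define g where "g b = \<pi> ! (\<nu> (Suc (idx \<tau> b)) - 1)" for b
  have pos: "Suc (idx \<tau> c) \<in> {1..?k} \<and> \<tau> ! (Suc (idx \<tau> c) - 1) = c" if "c \<in> {1..?k}" for c
    using idx_props[of c \<tau>] that tau by auto
  have mono: "g c < g d" if "c \<in> {1..?k}" "d \<in> {1..?k}" "c < d" for c d
    using o pos[OF that(1)] pos[OF that(2)] that(3) unfolding occ_def g_def by auto
  have set: "{\<pi> ! (\<nu> a - 1) | a. a \<in> {1..?k}} = set (map g [1..<Suc ?k])"
  proof (rule set_eqI, rule iffI)
    fix y assume "y \<in> {\<pi> ! (\<nu> a - 1) | a. a \<in> {1..?k}}"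
    then obtain a where a: "a \<in> {1..?k}" "y = \<pi> ! (\<nu> a - 1)" by auto
    have "\<tau> ! (a - 1) \<in> {1..?k}" using a tau by (metis atLeastAtMost_iff diff_less less_le_trans nth_mem zero_less_one le_eq_less_or_eq)
    moreover have "Suc (idx \<tau> (\<tau> ! (a - 1))) = a" using idx_nth[of \<tau> "a - 1"] a tau by auto
    ultimately have "y = g (\<tau> ! (a - 1))" "\<tau> ! (a - 1) \<in> set [1..<Suc ?k]" using a unfolding g_def by auto
    then show "y \<in> set (map g [1..<Suc ?k])" unfolding set_map by (rule image_eqI)
  next
    fix y assume "y \<in> set (map g [1..<Suc ?k])"
    then obtain c where "c \<in> {1..?k}" "y = g c" proof -
      from \<open>y \<in> set (map g [1..<Suc ?k])\<close> obtain c where "c \<in> set [1..<Suc ?k]" "y = g c" by auto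
      moreover then have "c \<in> {1..?k}" by (simp only: set_upt) auto
      ultimately show ?thesis using that by blast
    qed
    then show "y \<in> {\<pi> ! (\<nu> a - 1) | a. a \<in> {1..?k}}" using pos unfolding g_def by blast
  qed
  have sw: "sorted_wrt (<) (map g [1..<Suc ?k])"
    unfolding sorted_wrt_map by (rule sorted_wrt_mono_rel[OF _ sorted_wrt_upt]) (use mono in auto)
  have "sorted_list_of_set {\<pi> ! (\<nu> a - 1) | a. a \<in> {1..?k}} = map g [1..<Suc ?k]"
    unfolding set by (rule strict_sorted_equal) (use sw in auto)
  moreover have "map g [1..<Suc ?k] ! (b - 1) = g b" using b by (simp del: upt_Suc)
  ultimately show ?thesis using b unfolding lamE_def by (simp add: g_def)
qed


lemma main_perm:
  fixes \<pi> \<tau> :: "nat list" and C :: "(nat \<times> nat) set" and k :: nat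
  assumes tau: "distinct \<tau>" "set \<tau> = {1..length \<tau>}" and kk: "k = length \<tau>" "1 \<le> k"
    and P0: "\<forall>(a, b) \<in> C. b \<le> k" and P1: "\<forall>(a, b) \<in> C. a < k"
    and P2: "\<forall>(a, b) \<in> C. a \<le> idx \<tau> k \<longrightarrow> b \<noteq> k - 1"
    and P3: "\<forall>(a, b) \<in> C. a = Suc (idx \<tau> k) \<longrightarrow>
               1 \<le> b \<and> b + 2 \<le> k \<and> (\<exists>c. Suc (idx \<tau> k) < c \<and> c \<le> k \<and> \<tau> ! (c - 1) \<le> b)"
    and pi: "distinct \<pi>" "set \<pi> = {1..length \<pi>}"
    and no231: "\<not> contains \<pi> p231"
    and cc: "contains \<pi> (\<tau>, C)"
  shows "contains \<pi> (\<tau>, insert (idx \<tau> k, k) C)"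
proof -
  define n where "n = length \<pi>"
  define i0 where "i0 = idx \<tau> k"
  define i where "i = Suc i0"
  from cc obtain \<nu> where occ: "occ \<pi> \<tau> \<nu>" and box: "\<forall>(a, b) \<in> C. boxok \<pi> k \<nu> a b"
    using contains_iff kk by auto
  have kin: "k \<in> set \<tau>" using tau kk by auto
  have i: "i \<in> {1..k}" "\<tau> ! (i - 1) = k" using idx_props[OF kin] kk i_def i0_def by auto
  define pv where "pv j = \<pi> ! (j - 1)" for j
  have pvinj: "j = j'" if "j \<in> {1..n}" "j' \<in> {1..n}" "pv j = pv j'" for j j'
  proof -
    have "j - 1 = j' - 1" using that pi nth_eq_iff_index_eq[of \<pi> "j - 1" "j' - 1"] unfolding pv_def n_def by auto
    then show ?thesis using that by auto
  qed
  have nurange: "1 \<le> \<nu> a \<and> \<nu> a \<le> n" if "a \<in> {1..k}" for a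
    using occ that kk unfolding occ_def n_def by auto
  have numono: "\<nu> a < \<nu> b" if "a \<in> {1..k}" "b \<in> {1..k}" "a < b" for a b
    using occ that kk unfolding occ_def by auto
  have nuiso: "pv (\<nu> a) < pv (\<nu> b) \<longleftrightarrow> \<tau> ! (a - 1) < \<tau> ! (b - 1)" if "a \<in> {1..k}" "b \<in> {1..k}" for a b
    using occ that kk unfolding occ_def pv_def by auto
  have tvrange: "\<tau> ! (a - 1) \<in> {1..k}" if "a \<in> {1..k}" for a
    using that tau kk by (metis One_nat_def Suc_le_eq atLeastAtMost_iff diff_less less_le_trans nth_mem zero_less_one)
  have posb: "Suc (idx \<tau> b) \<in> {1..k} \<and> \<tau> ! (Suc (idx \<tau> b) - 1) = b" if "b \<in> {1..k}" for b
    using idx_props[of b \<tau>] that tau kk by auto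
  have tvinj: "a = b" if "a \<in> {1..k}" "b \<in> {1..k}" "\<tau> ! (a - 1) = \<tau> ! (b - 1)" for a b
  proof -
    have "a - 1 = b - 1" using that tau kk nth_eq_iff_index_eq[of \<tau> "a - 1" "b - 1"] by auto
    then show ?thesis using that by auto
  qed
  have below: "pv (\<nu> a) < pv (\<nu> i)" if "a \<in> {1..k}" "a \<noteq> i" for a
  proof -
    have "\<tau> ! (a - 1) \<noteq> k" using tvinj[OF that(1) i(1)] i(2) that(2) by auto
    then have "\<tau> ! (a - 1) < \<tau> ! (i - 1)" using tvrange[OF that(1)] i(2) by auto
    then show ?thesis using nuiso[OF that(1) i(1)] by auto
  qed
  have lam: "lamE \<pi> k \<nu> b = pv (\<nu> (Suc (idx \<tau> b)))" if "b \<in> {1..k}" for b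
    using lam_eq[OF occ tau, of b] that kk unfolding pv_def by auto
  have lamk: "lamE \<pi> k \<nu> k = pv (\<nu> i)" using lam[of k] i kk unfolding i_def i0_def by auto
  have lamsk: "lamE \<pi> k \<nu> (Suc k) = n + 1" unfolding lamE_def n_def by auto
  have lammono: "lamE \<pi> k \<nu> b < lamE \<pi> k \<nu> b'" if "b \<in> {1..k}" "b' \<in> {1..k}" "b < b'" for b b'
    using lam[OF that(1)] lam[OF that(2)] nuiso[OF conjunct1[OF posb[OF that(1)]] conjunct1[OF posb[OF that(2)]]]
      posb[OF that(1)] posb[OF that(2)] that(3) by auto
  have lamtv: "lamE \<pi> k \<nu> (\<tau> ! (c - 1)) = pv (\<nu> c)" if "c \<in> {1..k}" for c
  proof -
    have "Suc (idx \<tau> (\<tau> ! (c - 1))) = c" using idx_nth[of \<tau> "c - 1"] that tau kk by auto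
    then show ?thesis using lam[OF tvrange[OF that]] by auto
  qed
  have nuEi: "nuE n k \<nu>' i = \<nu>' i" for \<nu>' using i unfolding nuE_def by auto
  define X where "X = {j \<in> {1..n}. nuE n k \<nu> i0 < j \<and> j < \<nu> i \<and> pv (\<nu> i) < pv j}"
  show ?thesis
  proof (cases "X = {}")
    case True
    have "boxok \<pi> k \<nu> i0 k"
      unfolding boxok_def
    proof
      assume "\<exists>j\<in>{1..length \<pi>}. nuE (length \<pi>) k \<nu> i0 < j \<and> j < nuE (length \<pi>) k \<nu> (i0 + 1) \<and>
          lamE \<pi> k \<nu> k < \<pi> ! (j - 1) \<and> \<pi> ! (j - 1) < lamE \<pi> k \<nu> (k + 1)"
      then obtain j where "j \<in> {1..n}" "nuE n k \<nu> i0 < j" "j < \<nu> i" "pv (\<nu> i) < pv j"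
        using nuEi[of \<nu>] lamk unfolding n_def pv_def i_def by auto
      then have "j \<in> X" unfolding X_def by auto
      then show False using True by auto
    qed
    then show ?thesis using occ box contains_iff kk i0_def by auto
  next
    case False
    define x where "x = Min X"
    have finX: "finite X" unfolding X_def by auto
    have xX: "x \<in> X" using Min_in[OF finX False] x_def by auto
    have xmin: "x \<le> j" if "j \<in> X" for j using Min_le[OF finX that] x_def by auto
    have x: "x \<in> {1..n}" "nuE n k \<nu> i0 < x" "x < \<nu> i" "pv (\<nu> i) < pv x" using xX unfolding X_def by auto
    define \<nu>2 where "\<nu>2 = \<nu>(i := x)"
    have nu2: "\<nu>2 a = \<nu> a" if "a \<noteq> i" for a using that unfolding \<nu>2_def by auto
    have nu2i: "\<nu>2 i = x" unfolding \<nu>2_def by auto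
    have nuEi0: "nuE n k \<nu> i0 = \<nu> i0" if "1 \<le> i0" using that i unfolding nuE_def i_def by auto
    have occ2: "occ \<pi> \<tau> \<nu>2"
    proof -
      have A: "1 \<le> \<nu>2 a \<and> \<nu>2 a \<le> n" if "a \<in> {1..k}" for a
        using nurange[OF that] x(1) nu2 nu2i by (cases "a = i") auto
      have B: "\<nu>2 a < \<nu>2 b" if "a \<in> {1..k}" "b \<in> {1..k}" "a < b" for a b
      proof (cases "a = i")
        case True
        then show ?thesis using numono[OF i(1) that(2)] that(3) x(3) nu2[of b] nu2i by auto
      next
        case F: False
        show ?thesis
        proof (cases "b = i")
          case True
          then have "a \<le> i0" "1 \<le> i0" using that i_def by auto
          then have "\<nu> a \<le> \<nu> i0" using numono[OF that(1), of i0] that i i_def by (cases "a = i0") auto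
          then show ?thesis using True nu2[OF F] nu2i x(2) nuEi0 \<open>1 \<le> i0\<close> by auto
        next
          case False
          then show ?thesis using numono[OF that] nu2 F by auto
        qed
      qed
      have C: "pv (\<nu>2 a) < pv (\<nu>2 b) \<longleftrightarrow> \<tau> ! (a - 1) < \<tau> ! (b - 1)" if "a \<in> {1..k}" "b \<in> {1..k}" for a b
      proof -
        have lt: "\<tau> ! (c - 1) < k" if "c \<in> {1..k}" "c \<noteq> i" for c
          using tvinj[OF that(1) i(1)] i(2) that tvrange[OF that(1)] by fastforce
        show ?thesis
        proof (cases "a = i"; cases "b = i")
          assume "a = i" "b = i" then show ?thesis by simp
        next
          assume "a = i" "b \<noteq> i"
          then show ?thesis using below[OF that(2)] x(4) lt[OF that(2)] i(2) nu2 nu2i by auto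
        next
          assume "a \<noteq> i" "b = i"
          then show ?thesis using below[OF that(1)] x(4) lt[OF that(1)] i(2) nu2 nu2i by auto
        next
          assume "a \<noteq> i" "b \<noteq> i"
          then show ?thesis using nuiso[OF that] nu2 by auto
        qed
      qed
      show ?thesis unfolding occ_def using A B C kk unfolding n_def pv_def by auto
    qed
    have lam2: "lamE \<pi> k \<nu>2 b = lamE \<pi> k \<nu> b" if "b \<le> k + 1" "b \<noteq> k" for b
    proof (cases "b = 0 \<or> b = k + 1")
      case True then show ?thesis unfolding lamE_def by auto
    next
      case False
      then have b: "b \<in> {1..k}" using that by auto
      have "Suc (idx \<tau> b) \<noteq> i" using posb[OF b] i(2) that(2) by auto
      then show ?thesis using lam[OF b] lam_eq[OF occ2 tau, of b] b kk nu2 unfolding pv_def by auto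
    qed
    have lam2k: "lamE \<pi> k \<nu>2 k = pv x"
      using lam_eq[OF occ2 tau, of k] kk nu2i unfolding pv_def i_def i0_def by auto
    have nuE2: "nuE n k \<nu>2 a = nuE n k \<nu> a" if "a \<noteq> i" for a
      using nu2[OF that] unfolding nuE_def by auto
    have nuE2i: "nuE n k \<nu>2 i = x" using nuEi nu2i by auto
    have newbox: "boxok \<pi> k \<nu>2 i0 k"
      unfolding boxok_def
    proof
      assume "\<exists>j\<in>{1..length \<pi>}. nuE (length \<pi>) k \<nu>2 i0 < j \<and> j < nuE (length \<pi>) k \<nu>2 (i0 + 1) \<and>
          lamE \<pi> k \<nu>2 k < \<pi> ! (j - 1) \<and> \<pi> ! (j - 1) < lamE \<pi> k \<nu>2 (k + 1)"
      then obtain j where j: "j \<in> {1..n}" "nuE n k \<nu> i0 < j" "j < x" "pv x < pv j"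
        using nuE2i nuE2[of i0] lam2k unfolding n_def pv_def i_def by auto
      then have "j \<in> X" using x unfolding X_def by auto
      then show False using xmin j(3) by fastforce
    qed
    have oldbox: "boxok \<pi> k \<nu>2 a b" if ab: "(a, b) \<in> C" for a b
      unfolding boxok_def
    proof
      assume "\<exists>j\<in>{1..length \<pi>}. nuE (length \<pi>) k \<nu>2 a < j \<and> j < nuE (length \<pi>) k \<nu>2 (a + 1) \<and>
          lamE \<pi> k \<nu>2 b < \<pi> ! (j - 1) \<and> \<pi> ! (j - 1) < lamE \<pi> k \<nu>2 (b + 1)"
      then obtain j where j: "j \<in> {1..n}" "nuE n k \<nu>2 a < j" "j < nuE n k \<nu>2 (a + 1)"
          "lamE \<pi> k \<nu>2 b < pv j" "pv j < lamE \<pi> k \<nu>2 (b + 1)"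
        unfolding n_def pv_def by auto
      have old: "\<not> (nuE n k \<nu> a < j \<and> j < nuE n k \<nu> (a + 1) \<and> lamE \<pi> k \<nu> b < pv j \<and> pv j < lamE \<pi> k \<nu> (b + 1))"
        using box ab j(1) unfolding boxok_def n_def pv_def by auto
      have bk: "b \<le> k" "a < k" using P0 P1 ab by auto
      have lamk_lt: "lamE \<pi> k \<nu> k < lamE \<pi> k \<nu>2 k" using lam2k lamk x(4) by auto
      show False
      proof (cases "a < i")
        case True
        have b1: "b \<noteq> k - 1" using P2 ab True i_def i0_def by auto
        have L1: "lamE \<pi> k \<nu> b \<le> lamE \<pi> k \<nu>2 b" using lam2[of b] lamk_lt bk by (cases "b = k") auto
        have L2: "lamE \<pi> k \<nu>2 (b + 1) = lamE \<pi> k \<nu> (b + 1)" using lam2[of "b + 1"] bk b1 kk by auto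
        have N1: "nuE n k \<nu>2 a = nuE n k \<nu> a" using nuE2 True by auto
        have N2: "nuE n k \<nu>2 (a + 1) \<le> nuE n k \<nu> (a + 1)"
        proof (cases "a + 1 = i")
          case True then show ?thesis using nuE2i nuEi[of \<nu>] x(3) by auto
        next
          case False then show ?thesis using nuE2 by auto
        qed
        show False using old j N1 N2 L1 L2 by auto
      next
        case F: False
        show False
        proof (cases "a = i")
          case True
          obtain c where c: "i < c" "c \<le> k" "\<tau> ! (c - 1) \<le> b" and b: "1 \<le> b" "b + 2 \<le> k"
            using P3 ab True i_def i0_def by fastforce
          have cin: "c \<in> {1..k}" using c i by auto
          have L1: "lamE \<pi> k \<nu>2 b = lamE \<pi> k \<nu> b" using lam2[of b] b by auto
          have L2: "lamE \<pi> k \<nu>2 (b + 1) = lamE \<pi> k \<nu> (b + 1)" using lam2[of "b + 1"] b by auto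
          have N1: "nuE n k \<nu>2 a = x" using nuE2i True by auto
          have N2: "nuE n k \<nu>2 (a + 1) = nuE n k \<nu> (a + 1)" using nuE2 True by auto
          have lb: "lamE \<pi> k \<nu> (b + 1) < pv (\<nu> i)" using lammono[of "b + 1" k] b lamk by auto
          have lc: "pv (\<nu> c) \<le> lamE \<pi> k \<nu> b"
            using lamtv[OF cin] lammono[of "\<tau> ! (c - 1)" b] tvrange[OF cin] c(3) b
            by (cases "\<tau> ! (c - 1) = b") auto
          consider "\<nu> i < j" | "j = \<nu> i" | "j < \<nu> i" by linarith
          then show False
          proof cases
            case 1 then show False using old j N1 N2 L1 L2 nuEi[of \<nu>] True by auto
          next
            case 2 then show False using j(5) L2 lb by auto
          next
            case 3
            have "contains \<pi> p231"
              apply (rule mk231[of j "\<nu> i" "\<nu> c"])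
              using j(1) 3 numono[OF i(1) cin c(1)] nurange[OF cin] lc j(4) j(5) L1 L2 lb
              unfolding pv_def n_def by auto
            then show False using no231 by auto
          qed
        next
          case False
          then have ai: "i < a" using F by auto
          have ain: "a \<in> {1..k}" "a + 1 \<in> {1..k}" using ai i bk by auto
          have N1: "nuE n k \<nu>2 a = \<nu> a" using nuE2[of a] ai ain unfolding nuE_def by auto
          have N2: "nuE n k \<nu>2 (a + 1) = \<nu> (a + 1)" using nuE2[of "a + 1"] ai ain unfolding nuE_def by auto
          have N1': "nuE n k \<nu> a = \<nu> a" using ai ain unfolding nuE_def by auto
          have N2': "nuE n k \<nu> (a + 1) = \<nu> (a + 1)" using ai ain unfolding nuE_def by auto
          show False
          proof (cases "b = k - 1")
            case False
            have L1: "lamE \<pi> k \<nu> b \<le> lamE \<pi> k \<nu>2 b" using lam2[of b] lamk_lt bk by (cases "b = k") auto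
            have L2: "lamE \<pi> k \<nu>2 (b + 1) = lamE \<pi> k \<nu> (b + 1)" using lam2[of "b + 1"] bk False kk by auto
            show False using old j N1 N2 N1' N2' L1 L2 by auto
          next
            case True
            have L1: "lamE \<pi> k \<nu>2 b = lamE \<pi> k \<nu> b" using lam2[of b] True kk by auto
            have bk1: "b + 1 = k" using True kk by auto
            have L2: "lamE \<pi> k \<nu>2 (b + 1) = pv x" using lam2k bk1 by simp
            have L2': "lamE \<pi> k \<nu> (b + 1) = pv (\<nu> i)" using lamk bk1 by simp
            consider "pv j < pv (\<nu> i)" | "pv j = pv (\<nu> i)" | "pv (\<nu> i) < pv j" by linarith
            then show False
            proof cases
              case 1 then show False using old j N1 N2 N1' N2' L1 L2' by auto
            next
              case 2
              then have "j = \<nu> i" using pvinj[OF j(1), of "\<nu> i"] nurange[OF i(1)] by auto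
              then show False using numono[OF i(1) ain(1) ai] j(2) N1 by auto
            next
              case 3
              have "contains \<pi> p231"
                apply (rule mk231[of "\<nu> i" j "\<nu> (a + 1)"])
                using nurange[OF i(1)] numono[OF i(1) ain(1) ai] j(2) j(3) N1 N2 nurange[OF ain(2)]
                  below[OF ain(2)] ai 3
                unfolding pv_def n_def by auto
              then show False using no231 by auto
            qed
          qed
        qed
      qed
    qed
    show ?thesis unfolding contains_iff using occ2 newbox oldbox kk i0_def by auto
  qed
qed



lemma subtrees_trans: "u \<in> subtrees t \<Longrightarrow> v \<in> subtrees u \<Longrightarrow> v \<in> subtrees t"
  by (induction t) auto

lemma subtrees_set: "u \<in> subtrees t \<Longrightarrow> set_tree u \<subseteq> set_tree t"
  by (induction t) auto

lemma subtrees_bst: "bst t \<Longrightarrow> u \<in> subtrees t \<Longrightarrow> bst u"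
  by (induction t) auto

lemma subtrees_self: "t \<in> subtrees t"
  by (cases t) auto

lemma subtree_at_of:
  "bst t \<Longrightarrow> Node l x r \<in> subtrees t \<Longrightarrow> subtree_at t x = Node l x r"
proof (induction t)
  case Leaf then show ?case by auto
next
  case (Node L z R)
  show ?case
  proof (cases "Node l x r = Node L z R")
    case True then show ?thesis by auto
  next
    case False
    then have "Node l x r \<in> subtrees L \<or> Node l x r \<in> subtrees R" using Node.prems by auto
    then show ?thesis
    proof
      assume a: "Node l x r \<in> subtrees L"
      then have "x \<in> set_tree L" by (rule in_set_tree_if)
      then show ?thesis using Node a by auto
    next
      assume a: "Node l x r \<in> subtrees R"
      then have "x \<in> set_tree R" by (rule in_set_tree_if)
      then have zx: "z < x" using Node.prems by auto
      then have "x \<noteq> z" by simp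
      have "x \<notin> set_tree L"
      proof
        assume "x \<in> set_tree L"
        then have "x < z" using Node.prems by auto
        then show False using zx by simp
      qed
      then have "subtree_at (Node L z R) x = subtree_at R x" using \<open>x \<noteq> z\<close> by simp
      moreover have "bst R" using Node.prems by auto
      ultimately show ?thesis using Node.IH(2) a by auto
    qed
  qed
qed

lemma subtree_at_in:
  assumes "bst t" "j \<in> set_tree t"
  shows "\<exists>l r. subtree_at t j = Node l j r \<and> Node l j r \<in> subtrees t"
  using set_treeE[OF assms(2)] subtree_at_of[OF assms(1)] by blast

lemma rspine_set: "set (rspine u) \<subseteq> set_tree u"
  by (induction u) auto

lemma rspine_ge: "bst u \<Longrightarrow> u = Node l x r \<Longrightarrow> m \<in> set (rspine u) \<Longrightarrow> x \<le> m"
proof -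
  assume a: "bst u" "u = Node l x r" "m \<in> set (rspine u)"
  then have "m = x \<or> m \<in> set_tree r" using rspine_set[of r] by auto
  then show "x \<le> m" using a by (auto simp: less_imp_le)
qed

lemma rspine_butlast:
  "m \<in> set (butlast (rspine u)) \<Longrightarrow> \<exists>l r. Node l m r \<in> subtrees u \<and> r \<noteq> Leaf"
proof (induction u)
  case Leaf then show ?case by auto
next
  case (Node l x r)
  show ?case
  proof (cases "r = Leaf")
    case True then show ?thesis using Node.prems by auto
  next
    case False
    then have "rspine r \<noteq> []" by (cases r) auto
    then have "butlast (rspine (Node l x r)) = x # butlast (rspine r)" by auto
    then have "m = x \<or> m \<in> set (butlast (rspine r))" using Node.prems by auto
    then show ?thesis using Node.IH(2) False by auto
  qed
qed

lemma preorder_seg: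
  "u \<in> subtrees t \<Longrightarrow> \<exists>xs ys. preorder t = xs @ preorder u @ ys"
proof (induction t)
  case Leaf then show ?case by auto
next
  case (Node L z R)
  then consider "u = Node L z R" | "u \<in> subtrees L" | "u \<in> subtrees R" by auto
  then show ?case
  proof cases
    case 1 then show ?thesis by (metis append.left_neutral append.right_neutral)
  next
    case 2
    then obtain xs ys where "preorder L = xs @ preorder u @ ys" using Node.IH by blast
    then have "preorder (Node L z R) = (z # xs) @ preorder u @ (ys @ preorder R)" by auto
    then show ?thesis by blast
  next
    case 3
    then obtain xs ys where "preorder R = xs @ preorder u @ ys" using Node.IH by blast
    then have "preorder (Node L z R) = (z # preorder L @ xs) @ preorder u @ ys" by auto
    then show ?thesis by blast
  qed
qed

lemma inorder_seg:
  "u \<in> subtrees t \<Longrightarrow> \<exists>xs ys. inorder t = xs @ inorder u @ ys"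
proof (induction t)
  case Leaf then show ?case by auto
next
  case (Node L z R)
  then consider "u = Node L z R" | "u \<in> subtrees L" | "u \<in> subtrees R" by auto
  then show ?case
  proof cases
    case 1 then show ?thesis by (metis append.left_neutral append.right_neutral)
  next
    case 2
    then obtain xs ys where "inorder L = xs @ inorder u @ ys" using Node.IH by blast
    then have "inorder (Node L z R) = xs @ inorder u @ (ys @ z # inorder R)" by auto
    then show ?thesis by blast
  next
    case 3
    then obtain xs ys where "inorder R = xs @ inorder u @ ys" using Node.IH by blast
    then have "inorder (Node L z R) = (inorder L @ z # xs) @ inorder u @ ys" by auto
    then show ?thesis by blast
  qed
qed

lemma nesting:
  "bst t \<Longrightarrow> u \<in> subtrees t \<Longrightarrow> v \<in> subtrees t \<Longrightarrow> set_tree u \<inter> set_tree v \<noteq> {}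
   \<Longrightarrow> u \<in> subtrees v \<or> v \<in> subtrees u"
proof (induction t)
  case Leaf then show ?case by auto
next
  case (Node L z R)
  have sL: "\<forall>y\<in>set_tree L. y < z" and sR: "\<forall>y\<in>set_tree R. z < y" using Node.prems(1) by auto
  consider "u = Node L z R" | "v = Node L z R" | "u \<in> subtrees L" "v \<in> subtrees L"
    | "u \<in> subtrees R" "v \<in> subtrees R" | "u \<in> subtrees L" "v \<in> subtrees R"
    | "u \<in> subtrees R" "v \<in> subtrees L" using Node.prems by auto
  then show ?case
  proof cases
    case 1 then show ?thesis using Node.prems by auto
  next
    case 2 then show ?thesis using Node.prems by auto
  next
    case 3
    have "bst L" using Node.prems by auto
    then show ?thesis using Node.IH(1) 3 Node.prems(4) by blast
  next
    case 4
    have "bst R" using Node.prems by auto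
    then show ?thesis using Node.IH(2) 4 Node.prems(4) by blast
  next
    case 5
    obtain y where "y \<in> set_tree u" "y \<in> set_tree v" using Node.prems(4) by blast
    then have "y \<in> set_tree L" "y \<in> set_tree R" using subtrees_set[of u L] subtrees_set[of v R] 5 by auto
    then have False using sL sR by fastforce
    then show ?thesis ..
  next
    case 6
    obtain y where "y \<in> set_tree u" "y \<in> set_tree v" using Node.prems(4) by blast
    then have "y \<in> set_tree R" "y \<in> set_tree L" using subtrees_set[of u R] subtrees_set[of v L] 6 by auto
    then have False using sL sR by fastforce
    then show ?thesis ..
  qed
qed

lemma upt_seg:
  assumes "[a..<b] = xs @ zs @ ys"
  shows "set zs = {a + length xs ..< a + length xs + length zs}"
proof -
  have len: "b - a = length xs + length zs + length ys" using arg_cong[OF assms, of length] by auto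
  have "zs = take (length zs) (drop (length xs) [a..<b])" using assms by auto
  also have "\<dots> = [a + length xs ..< a + length xs + length zs]"
  proof (cases "length zs = 0")
    case True then show ?thesis by simp
  next
    case False
    then have "a + length xs + length zs \<le> b" using len by arith
    then show ?thesis by (simp add: take_upt)
  qed
  finally show ?thesis by (metis set_upt)
qed

lemma distinct_preorder: "distinct (inorder t) \<Longrightarrow> distinct (preorder t)"
  by (induction t) auto

lemma subtree_at_notin: "j \<notin> set_tree t \<Longrightarrow> subtree_at t j = Leaf"
  by (induction t) auto



lemma contains_mono: "C1 \<subseteq> C2 \<Longrightarrow> contains \<pi> (\<tau>, C2) \<Longrightarrow> contains \<pi> (\<tau>, C1)"
  unfolding contains_iff by blast

lemma sigma_mem:
  "(a, b) \<in> snd (sigma k P e) \<Longrightarrow> \<exists>j\<in>{1..k}. a = idx (preorder P) j \<and>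
     (b \<in> BRm P j \<or> (j \<noteq> the (rootv P) \<and> e j \<and> (b = Min (Pv P j) - 1 \<or> b = Max (Pv P j))))"
  unfolding sigma_def Let_def by (auto split: if_splits)

lemma fst_sigma: "fst (sigma k P e) = preorder P"
  unfolding sigma_def Let_def by simp

lemma BRm_node:
  assumes "bst P" "m \<in> BRm P j"
  shows "\<exists>l' r'. Node l' m r' \<in> subtrees P \<and> r' \<noteq> Leaf"
proof (cases "j \<in> set_tree P")
  case True
  then obtain l r where "subtree_at P j = Node l j r" "Node l j r \<in> subtrees P"
    using subtree_at_in[OF assms(1)] by blast
  then show ?thesis using assms(2) rspine_butlast[of m "Node l j r"] subtrees_trans unfolding BRm_def by metis
next
  case False
  then show ?thesis using assms(2) subtree_at_notin unfolding BRm_def by auto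
qed

theorem lemma9:
  fixes k :: nat and P :: "nat tree" and e :: "nat \<Rightarrow> bool"
  assumes "P \<in> trees_k k"
    and "friendly k P e"
  shows "\<forall>n. avoiders n p231 (sigma k P e) = avoiders n p231 (sigma_minus k P e)"
proof -
  define \<tau> where "\<tau> = preorder P"
  have inP: "inorder P = [1..<Suc k]" using assms(1) unfolding trees_k_def by auto
  have bstP: "bst P" unfolding bst_iff_sorted_wrt_less inP by (simp del: upt_Suc add: strict_sorted_iff)
  have setP: "set_tree P = {1..k}" using set_inorder[of P] inP by auto
  have tau: "distinct \<tau>" "set \<tau> = {1..length \<tau>}" "length \<tau> = k"
  proof -
    show "distinct \<tau>" unfolding \<tau>_def by (rule distinct_preorder) (simp add: inP)
    have "length \<tau> = length (inorder P)" unfolding \<tau>_def by simp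
    then show lt: "length \<tau> = k" using inP by simp
    show "set \<tau> = {1..length \<tau>}" unfolding lt unfolding \<tau>_def using setP by simp
  qed
  have fr: "cL P k \<noteq> None" "e k \<longrightarrow> \<not> e (the (cL P k))"
    using assms(2) unfolding friendly_def by auto
  have kin: "k \<in> set_tree P"
  proof (rule ccontr)
    assume "k \<notin> set_tree P"
    then have "cL P k = None" using subtree_at_notin unfolding cL_def by auto
    then show False using fr by auto
  qed
  obtain l r where v: "subtree_at P k = Node l k r" "Node l k r \<in> subtrees P"
    using subtree_at_in[OF bstP kin] by blast
  obtain l1 c r1 where l: "l = Node l1 c r1" using fr(1) v(1) unfolding cL_def by (cases l) auto
  have cLk: "the (cL P k) = c" using v(1) l unfolding cL_def by auto
  have bstv: "bst (Node l k r)" using subtrees_bst[OF bstP v(2)] .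
  have ck: "c < k" using bstv l by auto
  have c1: "1 \<le> c" using subtrees_set[OF v(2)] setP l by auto
  have K0: "k \<notin> BRm P j" for j
  proof
    assume "k \<in> BRm P j"
    then obtain l' r' where a: "Node l' k r' \<in> subtrees P" "r' \<noteq> Leaf" using BRm_node[OF bstP] by blast
    then obtain rl y rr where r': "r' = Node rl y rr" by (cases r') auto
    have "bst (Node l' k r')" using subtrees_bst[OF bstP a(1)] .
    then have "k < y" using r' by auto
    moreover have "y \<in> set_tree P" using subtrees_set[OF a(1)] r' by auto
    ultimately show False using setP by auto
  qed
  have K1: "k - 1 \<notin> BRm P j" for j
  proof
    assume "k - 1 \<in> BRm P j"
    then obtain l' r' where a: "Node l' (k - 1) r' \<in> subtrees P" "r' \<noteq> Leaf" using BRm_node[OF bstP] by blast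
    then obtain rl y rr where r': "r' = Node rl y rr" by (cases r') auto
    have b: "bst (Node l' (k - 1) r')" using subtrees_bst[OF bstP a(1)] .
    then have "k - 1 < y" using r' by auto
    moreover have "y \<in> set_tree P" using subtrees_set[OF a(1)] r' by auto
    ultimately have yk: "y = k" using setP by auto
    have "Node rl k rr \<in> subtrees P" using a(1) r' yk subtrees_trans[OF a(1), of "Node rl k rr"] by auto
    then have "subtree_at P k = Node rl k rr" using subtree_at_of[OF bstP] by blast
    then have "rl = l" using v(1) by auto
    then have "c \<in> set_tree r'" using l r' by auto
    then have "k - 1 < c" using b by auto
    then show False using ck by auto
  qed
  obtain xs0 ys0 where tseg: "\<tau> = xs0 @ (k # c # preorder l1 @ preorder r1 @ preorder r) @ ys0"
    using preorder_seg[OF v(2)] l unfolding \<tau>_def by auto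
  have i0: "idx \<tau> k = length xs0" using idx_nth[OF tau(1), of "length xs0"] tseg by auto
  have i0c: "\<tau> ! Suc (length xs0) = c" "Suc (length xs0) < k" using tseg tau(3) by (auto simp: nth_append)
  have Csub: "subtree_at P j = Node lj j rj \<and> Node lj j rj \<in> subtrees P" if "j \<in> {1..k}" "subtree_at P j = Node lj j rj" for j lj rj
    using that subtree_at_in[OF bstP, of j] setP by auto
  have K3: "idx \<tau> k < idx \<tau> j" if j: "j \<in> {1..k}" "Max (Pv P j) = k - 1" for j
  proof -
    obtain lj rj where u: "subtree_at P j = Node lj j rj" "Node lj j rj \<in> subtrees P"
      using subtree_at_in[OF bstP, of j] setP j(1) by auto
    have fin: "finite (Pv P j)" "Pv P j \<noteq> {}" unfolding Pv_def u(1) by auto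
    have km1u: "k - 1 \<in> set_tree (Node lj j rj)" using Max_in[OF fin] j(2) unfolding Pv_def u(1) by auto
    have knu: "k \<notin> set_tree (Node lj j rj)"
    proof
      assume "k \<in> set_tree (Node lj j rj)"
      then have "k \<le> Max (Pv P j)" using Max_ge[OF fin(1)] unfolding Pv_def u(1) by auto
      then show False using j(2) ck by auto
    qed
    obtain xs ys where iseg: "inorder P = xs @ inorder (Node l k r) @ ys" using inorder_seg[OF v(2)] by blast
    have "set (inorder (Node l k r)) = {1 + length xs ..< 1 + length xs + length (inorder (Node l k r))}"
      using upt_seg[of 1 "Suc k" xs "inorder (Node l k r)" ys] iseg inP by auto
    moreover have "c \<in> set (inorder (Node l k r))" "k \<in> set (inorder (Node l k r))" using l by auto
    ultimately have "k - 1 \<in> set (inorder (Node l k r))" using ck by auto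
    then have "set_tree (Node lj j rj) \<inter> set_tree (Node l k r) \<noteq> {}" using km1u by auto
    then have "Node lj j rj \<in> subtrees (Node l k r) \<or> Node l k r \<in> subtrees (Node lj j rj)"
      using nesting[OF bstP u(2) v(2)] by blast
    moreover have "Node l k r \<notin> subtrees (Node lj j rj)" by (rule Node_notin_subtrees_if[OF knu])
    ultimately have "Node lj j rj \<in> subtrees (Node l k r)" by blast
    then have "j \<in> set_tree (Node l k r)" by (rule in_set_tree_if)
    moreover have "j \<noteq> k" using knu by auto
    ultimately have "j \<in> set (c # preorder l1 @ preorder r1 @ preorder r)" using l by auto
    then obtain q where q: "q < length (c # preorder l1 @ preorder r1 @ preorder r)"
      "(c # preorder l1 @ preorder r1 @ preorder r) ! q = j" by (metis in_set_conv_nth)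
    define rest where "rest = c # preorder l1 @ preorder r1 @ preorder r"
    have ts: "\<tau> = xs0 @ k # (rest @ ys0)" using tseg unfolding rest_def by simp
    have "(rest @ ys0) ! q = j" using q unfolding rest_def[symmetric] by (simp add: nth_append)
    then have "\<tau> ! (Suc (length xs0 + q)) = j" "Suc (length xs0 + q) < length \<tau>" using ts q
      unfolding rest_def[symmetric] by (auto simp: nth_append)
    then have "idx \<tau> j = Suc (length xs0 + q)" using idx_nth[OF tau(1)] by metis
    then show ?thesis using i0 by auto
  qed
  define C where "C = snd (sigma k P e)"
  have sig: "sigma k P e = (\<tau>, C)" unfolding C_def \<tau>_def using fst_sigma[of k P e] by (metis prod.collapse)
  have sigm: "sigma_minus k P e = (\<tau>, C - {(idx \<tau> k, k)})" unfolding sigma_minus_def sig \<tau>_def by simp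
  show ?thesis
  proof (cases "e k")
    case False
    have "(idx \<tau> k, k) \<notin> C"
    proof
      assume "(idx \<tau> k, k) \<in> C"
      then obtain j where j: "j \<in> {1..k}" "idx \<tau> k = idx \<tau> j"
        "k \<in> BRm P j \<or> (j \<noteq> the (rootv P) \<and> e j \<and> (k = Min (Pv P j) - 1 \<or> k = Max (Pv P j)))"
        using sigma_mem[of "idx \<tau> k" k k P e] unfolding C_def \<tau>_def by auto
      have "j = k" using j(1,2) idx_props[of j \<tau>] idx_props[of k \<tau>] tau by auto
      then show False using j(3) K0 False by auto
    qed
    then have "sigma_minus k P e = sigma k P e" using sig sigm by auto
    then show ?thesis by simp
  next
    case True
    then have nec: "\<not> e c" using fr(2) cLk by auto
    let ?C' = "C - {(idx \<tau> k, k)}"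
    have jr: "\<exists>lj rj. subtree_at P j = Node lj j rj \<and> Node lj j rj \<in> subtrees P \<and> set_tree (Node lj j rj) \<subseteq> {1..k}"
      if "j \<in> {1..k}" for j
      using subtree_at_in[OF bstP, of j] setP that subtrees_set by blast
    have Pvfacts: "finite (Pv P j) \<and> Pv P j \<noteq> {} \<and> Pv P j \<subseteq> {1..k} \<and> j \<in> Pv P j" if jin: "j \<in> {1..k}" for j
    proof -
      obtain lj rj where "subtree_at P j = Node lj j rj" "set_tree (Node lj j rj) \<subseteq> {1..k}"
        using jr[OF jin] by blast
      moreover then have "Pv P j = set_tree (Node lj j rj)" unfolding Pv_def by simp
      ultimately show ?thesis by (metis finite_set_tree empty_iff tree.set_intros(2))
    qed
    have BRmsub: "BRm P j \<subseteq> Pv P j" for j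
      unfolding BRm_def Pv_def using rspine_set in_set_butlastD by fastforce
    have P0': "b \<le> k" if "(a, b) \<in> C" for a b
    proof -
      from that obtain j where j: "j \<in> {1..k}" "b \<in> BRm P j \<or> (b = Min (Pv P j) - 1 \<or> b = Max (Pv P j))"
        using sigma_mem unfolding C_def by blast
      show "b \<le> k" using j(2)
      proof (elim disjE)
        assume "b \<in> BRm P j" then show ?thesis using BRmsub[of j] Pvfacts[OF j(1)] by (meson atLeastAtMost_iff subsetD)
      next
        assume "b = Min (Pv P j) - 1"
        then show ?thesis using Pvfacts[OF j(1)] Min_in[of "Pv P j"] by fastforce
      next
        assume "b = Max (Pv P j)"
        then show ?thesis using Pvfacts[OF j(1)] Max_in[of "Pv P j"] by fastforce
      qed
    qed
    have P0: "\<forall>(a, b) \<in> ?C'. b \<le> k" using P0' by auto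
    have P1': "a < k" if "(a, b) \<in> C" for a b
    proof -
      from that obtain j where j: "j \<in> {1..k}" "a = idx \<tau> j" using sigma_mem unfolding C_def \<tau>_def by blast
      then show "a < k" using idx_props[of j \<tau>] tau by auto
    qed
    have P1: "\<forall>(a, b) \<in> ?C'. a < k" using P1' by auto
    have P2': False if ab: "(a, k - 1) \<in> C" "a \<le> idx \<tau> k" for a
    proof -
      from ab obtain j where j: "j \<in> {1..k}" "a = idx \<tau> j"
          "k - 1 \<in> BRm P j \<or> (k - 1 = Min (Pv P j) - 1 \<or> k - 1 = Max (Pv P j))"
        using sigma_mem[of a "k - 1" k P e] unfolding C_def \<tau>_def by blast
      show False using j(3)
      proof (elim disjE)
        assume "k - 1 \<in> BRm P j" then show False using K1 by auto
      next
        assume a: "k - 1 = Min (Pv P j) - 1"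
        have "Min (Pv P j) \<in> Pv P j" "Min (Pv P j) \<le> j" using Pvfacts[OF j(1)] Min_in Min_le by auto
        moreover have "1 \<le> Min (Pv P j)" using Pvfacts[OF j(1)] Min_in by fastforce
        ultimately have "j = k" using a j(1) c1 ck by auto
        moreover have "c \<in> Pv P k" unfolding Pv_def v(1) l by auto
        ultimately have "Min (Pv P j) \<le> c" using Pvfacts[OF j(1)] Min_le by auto
        then show False using a ck c1 \<open>j = k\<close> by auto
      next
        assume "k - 1 = Max (Pv P j)"
        then have "idx \<tau> k < idx \<tau> j" using K3[OF j(1)] by auto
        then show False using ab j by auto
      qed
    qed
    have P2: "\<forall>(a, b) \<in> ?C'. a \<le> idx \<tau> k \<longrightarrow> b \<noteq> k - 1" using P2' by auto
    have P3': "1 \<le> b \<and> b + 2 \<le> k \<and> (\<exists>c'. Suc (idx \<tau> k) < c' \<and> c' \<le> k \<and> \<tau> ! (c' - 1) \<le> b)"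
      if ab: "(Suc (idx \<tau> k), b) \<in> C" for b
    proof -
      from ab obtain j where j: "j \<in> {1..k}" "Suc (idx \<tau> k) = idx \<tau> j"
          "b \<in> BRm P j \<or> (e j \<and> (b = Min (Pv P j) - 1 \<or> b = Max (Pv P j)))"
        using sigma_mem[of "Suc (idx \<tau> k)" b k P e] unfolding C_def \<tau>_def by blast
      have "j = \<tau> ! idx \<tau> j" using idx_props[of j \<tau>] tau j(1) by auto
      then have jc: "j = c" using j(2) i0 i0c by auto
      then have bB: "b \<in> BRm P c" using j(3) nec by auto
      have sc: "subtree_at P c = l"
        using subtree_at_of[OF bstP] subtrees_trans[OF v(2), of l] l by auto
      have "b \<in> set (rspine l)" using bB sc unfolding BRm_def by (auto dest: in_set_butlastD)
      then have "c \<le> b" "b \<in> set_tree l"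
        using rspine_ge[OF subtrees_bst[OF bstv, of l] l] rspine_set[of l] l by auto
      then have "b < k" using bstv by auto
      moreover have "b \<noteq> k - 1" using K1 bB by auto
      ultimately have "b + 2 \<le> k" by auto
      moreover have "Suc (idx \<tau> k) < Suc (Suc (length xs0)) \<and> Suc (Suc (length xs0)) \<le> k
          \<and> \<tau> ! (Suc (Suc (length xs0)) - 1) \<le> b" using i0 i0c \<open>c \<le> b\<close> by auto
      ultimately show "1 \<le> b \<and> b + 2 \<le> k \<and> (\<exists>c'. Suc (idx \<tau> k) < c' \<and> c' \<le> k \<and> \<tau> ! (c' - 1) \<le> b)"
        using \<open>c \<le> b\<close> c1 by auto
    qed
    have P3: "\<forall>(a, b) \<in> ?C'. a = Suc (idx \<tau> k) \<longrightarrow>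
               1 \<le> b \<and> b + 2 \<le> k \<and> (\<exists>c'. Suc (idx \<tau> k) < c' \<and> c' \<le> k \<and> \<tau> ! (c' - 1) \<le> b)"
      using P3' by auto
    have eq: "contains \<pi> (\<tau>, C) \<longleftrightarrow> contains \<pi> (\<tau>, ?C')"
      if pi: "distinct \<pi>" "set \<pi> = {1..length \<pi>}" "\<not> contains \<pi> p231" for \<pi>
    proof
      assume "contains \<pi> (\<tau>, C)" then show "contains \<pi> (\<tau>, ?C')" by (rule contains_mono[rotated]) auto
    next
      assume "contains \<pi> (\<tau>, ?C')"
      then have "contains \<pi> (\<tau>, insert (idx \<tau> k, k) ?C')"
        using main_perm[OF tau(1,2) tau(3)[symmetric] _ P0 P1 P2 P3 pi] ck by auto
      then show "contains \<pi> (\<tau>, C)" by (rule contains_mono[rotated]) auto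
    qed
    show ?thesis
    proof
      fix n
      have "\<pi> \<in> perms n \<Longrightarrow> distinct \<pi> \<and> set \<pi> = {1..length \<pi>}" for \<pi>
        unfolding perms_def permutations_of_set_def using distinct_card by fastforce
      then show "avoiders n p231 (sigma k P e) = avoiders n p231 (sigma_minus k P e)"
        unfolding avoiders_def sig sigm using eq by blast
    qed
  qed
qed


end
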